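(* Let $m,n\ge1$ and let $u$ be a vertex of the unweighted complete bipartite graph $K_{m,n}$ lying in the part of size $m$. Then $u$ is sedentary if and only if $m\ge3$.
   Context: For a graph with adjacency matrix $A$, the transition matrix is $U(t)=e^{itA}$. A vertex $u$ is sedentary if $\inf_{t>0}|U(t)_{u,u}|\ge C$ for some constant $0<C\le1$. *)

theory Defs
  imports "HOL-Analysis.Analysis" "Jordan_Normal_Form.Matrix"
begin

text \<open>Adjacency matrix of the complete bipartite graph K_{m,n}: vertices 0..<m+n,
  the part of size m is {0..<m}, the part of size n is {m..<m+n}.\<close>
definition K_bip_adj :: "nat \<Rightarrow> nat \<Rightarrow> complex mat" where
  "K_bip_adj m n = mat (m + n) (m + n) (\<lambda>(i, j). if (i < m) \<noteq> (j < m) then 1 else 0)"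

definition transition :: "complex mat \<Rightarrow> real \<Rightarrow> complex mat" where
  "transition A t = mat (dim_row A) (dim_col A)
     (\<lambda>(i, j). \<Sum>k. ((\<i> * complex_of_real t) ^ k / of_nat (fact k)) * (A ^\<^sub>m k) $$ (i, j))"

definition sedentary :: "complex mat \<Rightarrow> nat \<Rightarrow> bool" where
  "sedentary A u \<longleftrightarrow>
     (\<exists>C::real. 0 < C \<and> C \<le> 1 \<and> (INF t\<in>{0<..}. cmod (transition A t $$ (u, u))) \<ge> C)"

end

theory Submission imports Defs begin

fun hK :: "nat \<Rightarrow> nat \<Rightarrow> nat \<Rightarrow> bool \<Rightarrow> bool \<Rightarrow> complex" where
  "hK m n 0 a b = (if a \<noteq> b then 1 else 0)"
| "hK m n (Suc k) a b = (if b then of_nat n * hK m n k a False else of_nat m * hK m n k a True)"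

lemma K_carrier: "K_bip_adj m n \<in> carrier_mat (m+n) (m+n)"
  by (simp add: K_bip_adj_def)

lemma K_pow: "i < m + n \<Longrightarrow> l < m + n \<Longrightarrow>
  (K_bip_adj m n ^\<^sub>m Suc k) $$ (i, l) = hK m n k (i < m) (l < m)"
proof (induction k arbitrary: l)
  case 0
  then show ?case by (simp add: K_bip_adj_def)
next
  case (Suc k)
  have "(K_bip_adj m n ^\<^sub>m Suc (Suc k)) $$ (i, l)
      = (\<Sum>p<m+n. (K_bip_adj m n ^\<^sub>m Suc k) $$ (i, p) * K_bip_adj m n $$ (p, l))"
    using Suc.prems K_carrier[of m n]
    by (simp add: scalar_prod_def atLeast0LessThan)
  also have "\<dots> = (\<Sum>p<m+n. hK m n k (i < m) (p < m) * (if (p < m) \<noteq> (l < m) then 1 else 0))"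
    using Suc by (intro sum.cong) (auto simp: K_bip_adj_def)
  also have "\<dots> = (\<Sum>p<m. hK m n k (i < m) True * (if l < m then 0 else 1))
      + (\<Sum>p\<in>{m..<m+n}. hK m n k (i < m) False * (if l < m then 1 else 0))"
  proof -
    have eq: "{..<m+n} = {..<m} \<union> {m..<m+n}" by auto
    have "(\<Sum>p<m+n. hK m n k (i < m) (p < m) * (if (p < m) \<noteq> (l < m) then 1 else 0))
      = (\<Sum>p<m. hK m n k (i < m) (p < m) * (if (p < m) \<noteq> (l < m) then 1 else 0))
      + (\<Sum>p\<in>{m..<m+n}. hK m n k (i < m) (p < m) * (if (p < m) \<noteq> (l < m) then 1 else 0))"
      unfolding eq by (rule sum.union_disjoint) auto
    also have "\<dots> = (\<Sum>p<m. hK m n k (i < m) True * (if l < m then 0 else 1))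
      + (\<Sum>p\<in>{m..<m+n}. hK m n k (i < m) False * (if l < m then 1 else 0))"
      by (intro arg_cong2[where f="(+)"] sum.cong) auto
    finally show ?thesis .
  qed
  also have "\<dots> = hK m n (Suc k) (i < m) (l < m)"
    by (auto simp: mult.commute)
  finally show ?case .
qed

lemma hK_closed:
  "hK m n (2*j) a b = (if a \<noteq> b then of_nat (m*n)^j else 0) \<and>
   hK m n (2*j+1) a b = (if a = b then (if a then of_nat n^(j+1) * of_nat m^j else of_nat m^(j+1) * of_nat n^j) else 0)"
  by (induction j arbitrary: a b) (auto simp: power_mult_distrib)

lemma K_diag:
  assumes "u < m"
  shows "(K_bip_adj m n ^\<^sub>m k) $$ (u, u) =
    (if k = 0 then 1 else if even k then of_nat n^(k div 2) * of_nat m^(k div 2 - 1) else 0)"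
proof (cases k)
  case 0
  then show ?thesis using assms by (simp add: K_bip_adj_def)
next
  case (Suc k')
  have e: "(K_bip_adj m n ^\<^sub>m k) $$ (u, u) = hK m n k' True True"
    using K_pow[of u m n u k'] assms Suc by simp
  show ?thesis
  proof (cases "even k'")
    case True
    then obtain j where j: "k' = 2*j" by (auto elim: evenE)
    show ?thesis using e j Suc hK_closed[of m n j True True] by simp
  next
    case False
    then obtain j where j: "k' = 2*j+1" by (auto elim: oddE)
    have "k = 2*(j+1)" using j Suc by simp
    then show ?thesis using e j Suc hK_closed[of m n j True True] by (simp add: mult.commute)
  qed
qed

definition Vf :: "nat \<Rightarrow> nat \<Rightarrow> real \<Rightarrow> real" where
  "Vf m n t = 1 - 1 / real m + cos (t * sqrt (real m * real n)) / real m"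

lemma term_eq:
  assumes "u < m"
  shows "((\<i> * complex_of_real t) ^ k / of_nat (fact k)) * (K_bip_adj m n ^\<^sub>m k) $$ (u, u)
    = complex_of_real (cos_coeff k * (t * sqrt (real m * real n)) ^ k / real m
        + (if k = 0 then 1 - 1 / real m else 0))"
proof -
  have m0: "real m > 0" using assms by simp
  consider "k = 0" | "odd k" | q where "k = 2 * Suc q"
    by (metis evenE gr0_conv_Suc mult_0_right neq0_conv)
  then show ?thesis
  proof cases
    case 1
    then show ?thesis using assms m0 by (simp add: K_diag cos_coeff_def K_bip_adj_def)
  next
    case 2
    then have "k > 0" by (rule odd_pos)
    then show ?thesis using assms 2 by (simp add: K_diag cos_coeff_def)
  next
    case 3
    have i2: "(\<i> * complex_of_real t) ^ k = complex_of_real ((-1)^Suc q * t ^ k)"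
      unfolding 3 power_mult_distrib power_mult by simp
    have sq: "sqrt (real m * real n) ^ k = (real m * real n) ^ Suc q"
      unfolding 3 power_mult by simp
    have kd: "k div 2 = Suc q" using 3 by simp
    have "((\<i> * complex_of_real t) ^ k / of_nat (fact k)) * (K_bip_adj m n ^\<^sub>m k) $$ (u, u)
       = complex_of_real ((-1)^Suc q * t ^ k / fact k * (real n ^ Suc q * real m ^ q))"
    proof -
      have "k \<noteq> 0" "even k" using 3 by auto
      then have "(K_bip_adj m n ^\<^sub>m k) $$ (u, u) = of_nat n ^ Suc q * of_nat m ^ q"
        using K_diag[OF assms, of n k] kd by simp
      then show ?thesis by (simp add: i2)
    qed
    also have "(-1)^Suc q * t ^ k / fact k * (real n ^ Suc q * real m ^ q)
       = cos_coeff k * (t * sqrt (real m * real n)) ^ k / real m"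
    proof -
      have ev: "even k" using 3 by simp
      have cc: "cos_coeff k = (-1)^Suc q / fact k" using ev kd by (simp add: cos_coeff_def)
      have mm: "(real m * real n)^Suc q = real m * (real n ^ Suc q * real m ^ q)"
        by (simp add: power_mult_distrib)
      have "(t * sqrt (real m * real n)) ^ k = t ^ k * (real m * (real n ^ Suc q * real m ^ q))"
        by (simp only: power_mult_distrib[of t] sq mm)
      note e = this
      show ?thesis using m0 unfolding cc e by (simp add: field_simps)
    qed
    finally show ?thesis using 3 by simp
  qed
qed

lemma diag_value:
  assumes "u < m"
  shows "transition (K_bip_adj m n) t $$ (u, u) = complex_of_real (Vf m n t)"
proof -
  let ?s = "t * sqrt (real m * real n)"
  have r: "(\<lambda>k. cos_coeff k * ?s ^ k / real m + (if k = 0 then 1 - 1 / real m else 0))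
      sums (cos ?s / real m + (1 - 1 / real m))"
  proof (rule sums_add)
    show "(\<lambda>k. cos_coeff k * ?s ^ k / real m) sums (cos ?s / real m)"
      using sums_divide[OF cos_converges[of ?s], of "real m"] by simp
    show "(\<lambda>k. if k = 0 then 1 - 1 / real m else 0) sums (1 - 1 / real m)"
      using sums_single[of 0 "\<lambda>_. 1 - 1 / real m"] by simp
  qed
  have c: "(\<lambda>k. ((\<i> * complex_of_real t) ^ k / of_nat (fact k)) * (K_bip_adj m n ^\<^sub>m k) $$ (u, u))
      sums complex_of_real (Vf m n t)"
    unfolding term_eq[OF assms] using r unfolding sums_of_real_iff Vf_def by (simp add: algebra_simps)
  show ?thesis
    using assms sums_unique[OF c] by (simp add: transition_def K_bip_adj_def)
qed

theorem proposition39: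
  fixes m n u :: nat
  assumes "m \<ge> 1" and "n \<ge> 1" and "u < m"
  shows "sedentary (K_bip_adj m n) u \<longleftrightarrow> m \<ge> 3"
proof -
  have F: "\<And>t. cmod (transition (K_bip_adj m n) t $$ (u, u)) = \<bar>Vf m n t\<bar>"
    using diag_value[OF assms(3)] by simp
  have m0: "real m > 0" using assms by simp
  have "real m * real n > 0" using assms(1,2) by (intro mult_pos_pos) auto
  then have mn0: "sqrt (real m * real n) > 0" by simp
  have pm: "m > 0" "n > 0" using assms(1,2) by auto
  show ?thesis
  proof
    assume "sedentary (K_bip_adj m n) u"
    then obtain C :: real where C: "0 < C" "(INF t\<in>{0<..}. \<bar>Vf m n t\<bar>) \<ge> C"
      unfolding sedentary_def F by blast
    show "m \<ge> 3"
    proof (rule ccontr)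
      assume "\<not> m \<ge> 3"
      then have "m = 1 \<or> m = 2" using assms by auto
      then obtain t0 where t0: "t0 > 0" "Vf m n t0 = 0"
      proof
        assume m1: "m = 1"
        show ?thesis
        proof (rule that[of "pi / 2 / sqrt (real m * real n)"])
          show "pi / 2 / sqrt (real m * real n) > 0" using mn0 pm by simp
          have "pi / 2 / sqrt (real m * real n) * sqrt (real m * real n) = pi / 2"
            using mn0 pm by simp
          then show "Vf m n (pi / 2 / sqrt (real m * real n)) = 0"
            unfolding Vf_def using m1 pm by simp
        qed
      next
        assume m2: "m = 2"
        show ?thesis
        proof (rule that[of "pi / sqrt (real m * real n)"])
          show "pi / sqrt (real m * real n) > 0" using mn0 pm by simp
          have "pi / sqrt (real m * real n) * sqrt (real m * real n) = pi"
            using mn0 pm by simp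
          then show "Vf m n (pi / sqrt (real m * real n)) = 0"
            unfolding Vf_def using m2 pm by simp
        qed
      qed
      have "(INF t\<in>{0<..}. \<bar>Vf m n t\<bar>) \<le> \<bar>Vf m n t0\<bar>"
        by (rule cINF_lower) (auto intro: t0 bdd_belowI2[where m=0])
      then show False using C t0 by simp
    qed
  next
    assume m3: "m \<ge> 3"
    have lb: "\<And>t. \<bar>Vf m n t\<bar> \<ge> 1 - 2 / real m"
    proof -
      fix t
      have "cos (t * sqrt (real m * real n)) / real m \<ge> -1 / real m"
        using m0 divide_right_mono[OF cos_ge_minus_one[of "t * sqrt (real m * real n)"], of "real m"] by simp
      moreover have "1 - 2 / real m \<ge> 0" using m3 by (simp add: field_simps)
      ultimately show "\<bar>Vf m n t\<bar> \<ge> 1 - 2 / real m" unfolding Vf_def by linarith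
    qed
    show "sedentary (K_bip_adj m n) u"
      unfolding sedentary_def F
    proof (intro exI conjI)
      show "0 < 1 - 2 / real m" using m3 by (simp add: field_simps)
      show "1 - 2 / real m \<le> 1" using m0 by simp
      show "1 - 2 / real m \<le> (INF t\<in>{0<..}. \<bar>Vf m n t\<bar>)"
        by (rule cINF_greatest) (auto intro: lb)
    qed
  qed
qed

end
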